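(* Fix integers $s,t\ge2$ and let $W=\{w_1<w_2<\cdots<w_k\}$ be a subset of $\{s+1,s+2,\ldots,st\}$. Let $\Omega_{s,t}(W)$ be the collection of all sets of integers $I=\{i_1<i_2<\cdots<i_k\}$ satisfying $w_\ell-s+\ell\leq i_\ell\leq w_\ell-1$ for all $\ell\in[k]$. Then \[\vert \Omega_{s,t}(W)\vert\geq \frac{s-k}{s}\binom{s+k-1}{k}.\] *)

theory Defs
  imports Complex_Main
begin

definition nth_elem :: "int set \<Rightarrow> nat \<Rightarrow> int" where
  "nth_elem A l = sorted_list_of_set A ! (l - 1)"

definition Omega :: "nat \<Rightarrow> int set \<Rightarrow> int set set" where
  "Omega s W = {I. finite I \<and> card I = card W \<and>
     (\<forall>l\<in>{1..card W}. nth_elem W l - int s + int l \<le> nth_elem I l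
                        \<and> nth_elem I l \<le> nth_elem W l - 1)}"

end

theory Submission
  imports Defs
begin

fun S :: "nat \<Rightarrow> nat \<Rightarrow> nat list set" where
  "S s 0 = {[]}"
| "S s (Suc k) = (if s \<le> Suc k then {} else Cons 1 ` S s k \<union> map Suc ` S (s - 1) (Suc k))"

declare S.simps(2)[simp del]

lemma S_Suc1: "\<not> s \<le> Suc k \<Longrightarrow> S s (Suc k) = Cons 1 ` S s k \<union> map Suc ` S (s - 1) (Suc k)"
  by (subst S.simps(2)) simp

lemma S_Suc0: "s \<le> Suc k \<Longrightarrow> S s (Suc k) = {}"
  by (subst S.simps(2)) simp

lemma S_valid:
  "c \<in> S s k \<Longrightarrow> length c = k \<and> (\<forall>j<k. 1 \<le> c!j \<and> c!j + k \<le> s + j)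
     \<and> (\<forall>i j. i \<le> j \<longrightarrow> j < k \<longrightarrow> c!i \<le> c!j)"
proof (induction s k arbitrary: c rule: S.induct)
  case (1 s)
  then have "c = []" by simp
  then show ?case by simp
next
  case (2 s k)
  from 2(3) have sk: "\<not> s \<le> Suc k" using S_Suc0 by fastforce
  note c = 2(3)[unfolded S_Suc1[OF sk]]
  from c consider (a) d where "d \<in> S s k" "c = 1 # d" | (b) d where "d \<in> S (s-1) (Suc k)" "c = map Suc d"
    by auto
  then show ?case
  proof cases
    case a
    note IH = 2(1)[OF sk a(1)]
    have l: "length d = k" and v: "\<And>j. j < k \<Longrightarrow> 1 \<le> d!j \<and> d!j + k \<le> s + j"
      and m: "\<And>i j. i \<le> j \<Longrightarrow> j < k \<Longrightarrow> d!i \<le> d!j" using IH by blast+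
    show ?thesis
    proof (intro conjI allI impI)
      show "length c = Suc k" using l a by simp
    next
      fix j assume j: "j < Suc k"
      show "1 \<le> c ! j"
      proof (cases j)
        case 0 then show ?thesis using a by simp
      next
        case (Suc j') then show ?thesis using a v[of j'] j by simp
      qed
    next
      fix j assume j: "j < Suc k"
      show "c ! j + Suc k \<le> s + j"
      proof (cases j)
        case 0 then show ?thesis using a sk by simp
      next
        case (Suc j') then show ?thesis using a v[of j'] j by simp
      qed
    next
      fix i j assume ij: "i \<le> j" "j < Suc k"
      show "c ! i \<le> c ! j"
      proof (cases i)
        case 0
        then show ?thesis using a ij v[of "j - 1"] by (cases j) auto
      next
        case (Suc i')
        then obtain j' where "j = Suc j'" using ij by (cases j) auto
        then show ?thesis using Suc a ij m[of i' j'] by simp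
      qed
    qed
  next
    case b
    note IH = 2(2)[OF sk b(1)]
    have l: "length d = Suc k" using IH by simp
    show ?thesis
    proof (intro conjI allI impI)
      show "length c = Suc k" using l b by simp
    next
      fix j assume j: "j < Suc k"
      then have "1 \<le> d!j \<and> d!j + Suc k \<le> s - 1 + j" using IH by blast
      then show "1 \<le> c ! j" "c ! j + Suc k \<le> s + j" using j l b sk by auto
    next
      fix i j assume ij: "i \<le> j" "j < Suc k"
      then have "d!i \<le> d!j" using IH by blast
      then show "c ! i \<le> c ! j" using ij l b by auto
    qed
  qed
qed

lemma S_finite: "finite (S s k)"
proof (induction s k rule: S.induct)
  case (2 s k)
  then show ?case by (cases "s \<le> Suc k") (simp_all add: S_Suc0 S_Suc1)
qed simp

lemma S_card:
  assumes "\<not> s \<le> Suc k"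
  shows "card (S s (Suc k)) = card (S s k) + card (S (s - 1) (Suc k))"
proof -
  have d: "Cons 1 ` S s k \<inter> map Suc ` S (s - 1) (Suc k) = {}"
  proof -
    have hd1: "hd (map Suc e) \<noteq> 1" if "e \<in> S (s-1) (Suc k)" for e
    proof -
      from S_valid[OF that] have "length e = Suc k" "1 \<le> e!0" by auto
      then show ?thesis by (cases e) auto
    qed
    show ?thesis
    proof (rule equals0I)
      fix x assume x: "x \<in> Cons 1 ` S s k \<inter> map Suc ` S (s - 1) (Suc k)"
      then obtain d where "x = 1 # d" by auto
      moreover from x obtain e where "e \<in> S (s-1) (Suc k)" "x = map Suc e" by auto
      ultimately show False using hd1 by (metis list.sel(1))
    qed
  qed
  have "card (S s (Suc k)) = card (Cons 1 ` S s k) + card (map Suc ` S (s - 1) (Suc k))"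
    using assms d by (simp add: card_Un_disjoint S_finite S_Suc1)
  also have "\<dots> = card (S s k) + card (S (s - 1) (Suc k))"
    by (simp add: card_image inj_on_def inj_map_eq_map)
  finally show ?thesis .
qed

definition h :: "nat \<Rightarrow> nat \<Rightarrow> real" where
  "h s k = (real s - real k) / real s * real ((s + k - 1) choose k)"

lemma h_rec:
  assumes "s > Suc k"
  shows "h s (Suc k) = h s k + h (s - 1) (Suc k)"
proof -
  define m where "m = s + k - 1"
  have m1: "s + Suc k - 1 = Suc m" "s - 1 + Suc k - 1 = m" using assms by (auto simp: m_def)
  have key: "real (Suc k) * real (m choose Suc k) = real (m - k) * real (m choose k)"
  proof -
    have "Suc k * (Suc (k + (m - k - 1)) choose Suc k) = Suc (m - k - 1) * (Suc (k + (m - k - 1)) choose k)"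
      by (rule Suc_times_binomial_add)
    moreover have "Suc (k + (m - k - 1)) = m" "Suc (m - k - 1) = m - k" using assms by (auto simp: m_def)
    ultimately have "Suc k * (m choose Suc k) = (m - k) * (m choose k)" by metis
    then show ?thesis by (metis of_nat_mult)
  qed
  have pas: "real (Suc m choose Suc k) = real (m choose k) + real (m choose Suc k)" by simp
  have mk: "real (m - k) = real s - 1" using assms by (simp add: m_def of_nat_diff)
  define C where "C = real (m choose k)"
  have C2: "real (m choose Suc k) = (real s - 1) * C / (real k + 1)"
    using key mk by (simp add: C_def field_simps)
  have sp: "real s > 0" "real s - 1 > 0" using assms by auto
  have m0: "s + k - 1 = m" by (simp add: m_def)
  have e1: "h s (Suc k) = (real s - real k - 1) / real s * (C + (real s - 1) * C / (real k + 1))"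
    unfolding h_def m1 pas C2 C_def by simp
  have e2: "h s k = (real s - real k) / real s * C" unfolding h_def m0 C_def by simp
  have e3: "h (s - 1) (Suc k) = (real s - real k - 2) / (real s - 1) * ((real s - 1) * C / (real k + 1))"
    unfolding h_def m1 C2 using assms by (simp add: of_nat_diff)
  have kp: "real k + 1 > 0" by simp
  have "(real s - real k - 1) / real s * (C + (real s - 1) * C / (real k + 1))
      = (real s - real k) / real s * C + (real s - real k - 2) / (real s - 1) * ((real s - 1) * C / (real k + 1))"
    using sp kp by (simp add: divide_simps) (simp add: algebra_simps)
  then show ?thesis
    unfolding e1 e2 e3 .
qed

lemma S_lower: "s \<ge> 1 \<Longrightarrow> h s k \<le> real (card (S s k))"
proof (induction s k rule: S.induct)
  case (1 s)
  then show ?case by (simp add: h_def)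
next
  case (2 s k)
  show ?case
  proof (cases "s \<le> Suc k")
    case True
    then have "h s (Suc k) \<le> 0" unfolding h_def
      by (intro mult_nonpos_nonneg divide_nonpos_nonneg) auto
    then show ?thesis by (simp add: S_Suc0 True)
  next
    case False
    have "h s (Suc k) = h s k + h (s - 1) (Suc k)" using False by (intro h_rec) auto
    also have "\<dots> \<le> real (card (S s k)) + real (card (S (s - 1) (Suc k)))"
      using 2(1)[OF False 2(3)] 2(2)[OF False] False by (intro add_mono) auto
    also have "\<dots> = real (card (S s (Suc k)))" using S_card[OF False] by simp
    finally show ?thesis .
  qed
qed

lemma sl_set: "sorted_wrt (<) (xs :: int list) \<Longrightarrow> sorted_list_of_set (set xs) = xs"
  by (simp add: sorted_list_of_set_sort_remdups strict_sorted_iff sorted_sort_id)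

theorem lemma3:
  fixes s t :: nat and W :: "int set"
  assumes "s \<ge> 2" and "t \<ge> 2"
    and "W \<subseteq> {int s + 1 .. int s * int t}"
  shows "real (card (Omega s W)) \<ge>
           (real s - real (card W)) / real s * real ((s + card W - 1) choose (card W))"
proof -
  define k where "k = card W"
  define ws where "ws = sorted_list_of_set W"
  have finW: "finite W" using assms(3) finite_subset by blast
  have lws: "length ws = k" unfolding ws_def k_def by simp
  have sws: "sorted_wrt (<) ws" unfolding ws_def by (rule strict_sorted_list_of_set)
  have ne: "nth_elem W l = ws!(l-1)" for l by (simp add: nth_elem_def ws_def)
  have wsW: "ws!j \<in> W" if "j < k" for j
    using that lws finW nth_mem[of j ws] unfolding ws_def by auto
  have wslt: "ws!i < ws!j" if "i < j" "j < k" for i j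
    using sws that lws by (simp add: sorted_wrt_iff_nth_less)
  define L where "L c = map (\<lambda>l. ws!l - int (c!(k-1-l))) [0..<k]" for c
  have Lsorted: "sorted_wrt (<) (L c)" if c: "c \<in> S s k" for c
  proof -
    from S_valid[OF c] have mono: "\<And>i j. i \<le> j \<Longrightarrow> j < k \<Longrightarrow> c!i \<le> c!j" by blast
    show ?thesis
      unfolding sorted_wrt_iff_nth_less
    proof (intro allI impI)
      fix i j assume ij: "i < j" "j < length (L c)"
      then have "j < k" by (simp add: L_def)
      have "ws!i < ws!j" using wslt ij \<open>j < k\<close> by blast
      moreover have "c!(k-1-j) \<le> c!(k-1-i)" using mono ij \<open>j < k\<close> by auto
      ultimately show "L c ! i < L c ! j" using ij \<open>j < k\<close> by (simp add: L_def)
    qed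
  qed
  have LO: "set (L c) \<in> Omega s W" if c: "c \<in> S s k" for c
  proof -
    from S_valid[OF c] have v: "length c = k" "\<And>j. j < k \<Longrightarrow> 1 \<le> c!j \<and> c!j + k \<le> s + j" by auto
    have sl: "sorted_list_of_set (set (L c)) = L c" using sl_set Lsorted[OF c] by blast
    have "distinct (L c)" using Lsorted[OF c] by (simp add: strict_sorted_iff)
    then have cd: "card (set (L c)) = k" by (metis distinct_card length_map length_upt diff_zero L_def)
    have ni: "nth_elem (set (L c)) l = ws!(l-1) - int (c!(k-l))" if "l \<in> {1..k}" for l
      unfolding nth_elem_def sl using that by (auto simp: L_def)
    show ?thesis unfolding Omega_def
    proof (intro CollectI conjI ballI)
      show "finite (set (L c))" by simp
      show "card (set (L c)) = card W" using cd k_def by simp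
    next
      fix l assume l: "l \<in> {1..card W}"
      then have l': "l \<in> {1..k}" by (simp add: k_def)
      have "k - l < k" using l' by auto
      from v(2)[OF this] l' have b: "1 \<le> c!(k-l)" "c!(k-l) + l \<le> s" by auto
      have b2: "int (c!(k-l)) \<ge> 1" "int (c!(k-l)) + int l \<le> int s" using b by simp_all
      show "nth_elem W l - int s + int l \<le> nth_elem (set (L c)) l"
        unfolding ni[OF l'] ne using b2 by simp
      show "nth_elem (set (L c)) l \<le> nth_elem W l - 1"
        unfolding ni[OF l'] ne using b2 by simp
    qed
  qed
  have inj: "inj_on (\<lambda>c. set (L c)) (S s k)"
  proof (rule inj_onI)
    fix c d assume c: "c \<in> S s k" and d: "d \<in> S s k" and e: "set (L c) = set (L d)"
    have "L c = L d" using e sl_set Lsorted[OF c] Lsorted[OF d] by metis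
    then have eq: "\<And>l. l < k \<Longrightarrow> c!(k-1-l) = d!(k-1-l)"
    proof -
      fix l assume l: "l < k"
      have "L c ! l = L d ! l" using \<open>L c = L d\<close> by simp
      then show "c!(k-1-l) = d!(k-1-l)" using l by (simp add: L_def)
    qed
    show "c = d"
    proof (rule nth_equalityI)
      show "length c = length d" using S_valid[OF c] S_valid[OF d] by simp
      fix j assume "j < length c"
      then have j: "j < k" using S_valid[OF c] by simp
      then have "k - 1 - (k - 1 - j) = j" by simp
      with eq[of "k-1-j"] j show "c!j = d!j" by auto
    qed
  qed
  have finO: "finite (Omega s W)"
  proof (rule finite_subset)
    show "Omega s W \<subseteq> Pow {1 .. int s * int t}"
    proof
      fix I assume I: "I \<in> Omega s W"
      have Id: "finite I \<and> card I = card W \<and> (\<forall>l\<in>{1..card W}. nth_elem W l - int s + int l \<le> nth_elem I l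
                        \<and> nth_elem I l \<le> nth_elem W l - 1)"
        using I unfolding Omega_def by (rule CollectD)
      then have fI: "finite I" and cI: "card I = k" by (simp_all add: k_def)
      have bd: "nth_elem W l - int s + int l \<le> nth_elem I l \<and> nth_elem I l \<le> nth_elem W l - 1"
        if "l \<in> {1..k}" for l
        using Id that unfolding k_def by blast
      have "I \<subseteq> {1 .. int s * int t}"
      proof
        fix x assume "x \<in> I"
        then have "x \<in> set (sorted_list_of_set I)" using fI by simp
        then obtain j where j: "j < k" "x = sorted_list_of_set I ! j"
          using cI by (metis in_set_conv_nth length_sorted_list_of_set)
        have "Suc j \<in> {1..k}" using j by simp
        from bd[OF this] have "ws!j - int s + int (Suc j) \<le> x \<and> x \<le> ws!j - 1"
          using j by (simp add: nth_elem_def ws_def)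
        moreover have "ws!j \<in> {int s + 1 .. int s * int t}" using wsW[OF j(1)] assms(3) by blast
        ultimately show "x \<in> {1 .. int s * int t}" by auto
      qed
      then show "I \<in> Pow {1 .. int s * int t}" by simp
    qed
  qed simp
  have "h s k \<le> real (card (S s k))" using S_lower assms(1) by simp
  also have "card (S s k) = card ((\<lambda>c. set (L c)) ` S s k)" using inj by (simp add: card_image)
  also have "card ((\<lambda>c. set (L c)) ` S s k) \<le> card (Omega s W)"
    using LO finO by (intro card_mono) auto
  finally show ?thesis unfolding h_def k_def by simp
qed

end
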